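(* Let $A\in\mathbb{R}^{m\times m}$ be positive definite, $B\in\mathbb{R}^{m\times n}$ ($n\le m$), $\alpha\ge0$, $\beta>0$. Then every eigenvalue $\lambda$ of $\mathcal{P}_{MGSSP}^{-1}\mathcal{A}$ satisfies $|\lambda-\tfrac12|\le\tfrac12$. If moreover $B$ has full column rank, then every eigenvalue of $\mathcal{P}_{MGSSP}^{-1}\mathcal{A}$ has positive real part.
   Context: A real square matrix $A$ is called positive definite if $x^TAx>0$ for all nonzero $x\in\mathbb{R}^m$ ($A$ need not be symmetric). $\mathcal{A}=\begin{pmatrix}A & B\\ -B^T & 0\end{pmatrix}$ and, for $\alpha\ge0,\beta>0$, $\mathcal{P}_{MGSSP}=\begin{pmatrix}\alpha I+2A & 2B\\ -2B^T & \beta I\end{pmatrix}$ (which is nonsingular). *)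

theory Defs
  imports "Jordan_Normal_Form.Gauss_Jordan_Elimination" "Jordan_Normal_Form.Char_Poly"
          "Jordan_Normal_Form.DL_Rank"
begin

definition pos_def_mat :: "real mat \<Rightarrow> bool" where
  "pos_def_mat A \<longleftrightarrow> A \<in> carrier_mat (dim_row A) (dim_row A) \<and>
     (\<forall>x \<in> carrier_vec (dim_row A). x \<noteq> 0\<^sub>v (dim_row A) \<longrightarrow> x \<bullet> (A *\<^sub>v x) > 0)"

definition saddle_mat :: "real mat \<Rightarrow> real mat \<Rightarrow> real mat" where
  "saddle_mat A B = four_block_mat A B (- transpose_mat B) (0\<^sub>m (dim_col B) (dim_col B))"

definition P_MGSSP :: "real \<Rightarrow> real \<Rightarrow> real mat \<Rightarrow> real mat \<Rightarrow> real mat" where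
  "P_MGSSP \<alpha> \<beta> A B = four_block_mat (\<alpha> \<cdot>\<^sub>m 1\<^sub>m (dim_row A) + 2 \<cdot>\<^sub>m A) (2 \<cdot>\<^sub>m B)
      (- (2 \<cdot>\<^sub>m transpose_mat B)) (\<beta> \<cdot>\<^sub>m 1\<^sub>m (dim_col B))"

end

theory Submission
  imports Defs
begin

definition rv :: "nat \<Rightarrow> complex vec \<Rightarrow> real vec" where
  "rv l y = vec l (\<lambda>j. Re (y $ j))"
definition iv :: "nat \<Rightarrow> complex vec \<Rightarrow> real vec" where
  "iv l y = vec l (\<lambda>j. Im (y $ j))"

lemma cmult_decomp:
  fixes M :: "real mat" and y :: "complex vec"
  assumes M: "M \<in> carrier_mat k l" and y: "y \<in> carrier_vec l" and i: "i < k"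
  shows "(map_mat complex_of_real M *\<^sub>v y) $ i =
     complex_of_real ((M *\<^sub>v rv l y) $ i) + \<i> * complex_of_real ((M *\<^sub>v iv l y) $ i)"
proof -
  have l: "(map_mat complex_of_real M *\<^sub>v y) $ i = (\<Sum>j\<in>{0..<l}. complex_of_real (M $$ (i,j)) * y $ j)"
    using M y i by (simp add: mult_mat_vec_def scalar_prod_def)
  have r1: "(M *\<^sub>v rv l y) $ i = (\<Sum>j\<in>{0..<l}. M $$ (i,j) * Re (y $ j))"
    using M y i by (simp add: mult_mat_vec_def scalar_prod_def rv_def)
  have r2: "(M *\<^sub>v iv l y) $ i = (\<Sum>j\<in>{0..<l}. M $$ (i,j) * Im (y $ j))"
    using M y i by (simp add: mult_mat_vec_def scalar_prod_def iv_def)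
  show ?thesis unfolding l r1 r2
  proof (rule complex_eqI)
    show "Re (\<Sum>j\<in>{0..<l}. complex_of_real (M $$ (i,j)) * y $ j) =
      Re (complex_of_real (\<Sum>j\<in>{0..<l}. M $$ (i,j) * Re (y $ j)) + \<i> * complex_of_real (\<Sum>j\<in>{0..<l}. M $$ (i,j) * Im (y $ j)))"
      unfolding Re_sum by simp
    show "Im (\<Sum>j\<in>{0..<l}. complex_of_real (M $$ (i,j)) * y $ j) =
      Im (complex_of_real (\<Sum>j\<in>{0..<l}. M $$ (i,j) * Re (y $ j)) + \<i> * complex_of_real (\<Sum>j\<in>{0..<l}. M $$ (i,j) * Im (y $ j)))"
      unfolding Im_sum by simp
  qed
qed

lemma quad_re:
  fixes M :: "real mat" and v :: "complex vec"
  assumes M: "M \<in> carrier_mat N N" and v: "v \<in> carrier_vec N"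
  shows "Re (\<Sum>i\<in>{0..<N}. cnj (v $ i) * (map_mat complex_of_real M *\<^sub>v v) $ i) =
     rv N v \<bullet> (M *\<^sub>v rv N v) + iv N v \<bullet> (M *\<^sub>v iv N v)"
proof -
  have "Re (\<Sum>i\<in>{0..<N}. cnj (v $ i) * (map_mat complex_of_real M *\<^sub>v v) $ i)
    = (\<Sum>i\<in>{0..<N}. Re (v $ i) * (M *\<^sub>v rv N v) $ i + Im (v $ i) * (M *\<^sub>v iv N v) $ i)"
    unfolding Re_sum by (rule sum.cong, simp, subst cmult_decomp[OF M v], auto)
  also have "\<dots> = rv N v \<bullet> (M *\<^sub>v rv N v) + iv N v \<bullet> (M *\<^sub>v iv N v)"
    using M by (simp add: scalar_prod_def sum.distrib rv_def iv_def)
  finally show ?thesis .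
qed

lemma saddle_quad:
  fixes A B :: "real mat"
  assumes A: "A \<in> carrier_mat m m" and B: "B \<in> carrier_mat m n" and u: "u \<in> carrier_vec (m+n)"
  shows "u \<bullet> (saddle_mat A B *\<^sub>v u) = vec_first u m \<bullet> (A *\<^sub>v vec_first u m)"
proof -
  define x where "x = vec_first u m"
  define y where "y = vec_last u n"
  have cx: "x \<in> carrier_vec m" and cy: "y \<in> carrier_vec n" unfolding x_def y_def by auto
  have u': "u = x @\<^sub>v y" using u unfolding x_def y_def by simp
  have dB: "dim_col B = n" using B by auto
  have BT: "transpose_mat B \<in> carrier_mat n m" using B by simp
  have z0: "0\<^sub>m n n *\<^sub>v y = 0\<^sub>v n" using cy by (intro eq_vecI) (auto simp: scalar_prod_def)
  have neg: "- transpose_mat B *\<^sub>v x = - (transpose_mat B *\<^sub>v x)"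
    by (rule uminus_mult_mat_vec) (use cx B in simp)
  have c1: "A *\<^sub>v x + B *\<^sub>v y \<in> carrier_vec m" using A B cx cy by simp
  have c2: "- (transpose_mat B *\<^sub>v x) \<in> carrier_vec n" using BT cx by simp
  have "saddle_mat A B *\<^sub>v (x @\<^sub>v y) = (A *\<^sub>v x + B *\<^sub>v y) @\<^sub>v (- transpose_mat B *\<^sub>v x + 0\<^sub>m n n *\<^sub>v y)"
    unfolding saddle_mat_def dB
    by (rule four_block_mat_mult_vec[OF A B _ _ cx cy]) (use B in auto)
  also have "- transpose_mat B *\<^sub>v x + 0\<^sub>m n n *\<^sub>v y = - (transpose_mat B *\<^sub>v x)"
    unfolding z0 neg using c2 by simp
  finally have Su: "saddle_mat A B *\<^sub>v u = (A *\<^sub>v x + B *\<^sub>v y) @\<^sub>v - (transpose_mat B *\<^sub>v x)"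
    unfolding u' .
  have "u \<bullet> (saddle_mat A B *\<^sub>v u) = x \<bullet> (A *\<^sub>v x + B *\<^sub>v y) + y \<bullet> (- (transpose_mat B *\<^sub>v x))"
    unfolding Su by (subst u', rule scalar_prod_append[OF cx cy c1 c2])
  also have "x \<bullet> (A *\<^sub>v x + B *\<^sub>v y) = x \<bullet> (A *\<^sub>v x) + x \<bullet> (B *\<^sub>v y)"
    by (rule scalar_prod_add_distrib[OF cx]) (use A B cx cy in auto)
  also have "y \<bullet> (- (transpose_mat B *\<^sub>v x)) = - (y \<bullet> (transpose_mat B *\<^sub>v x))"
    by (rule scalar_prod_uminus_right) (use cy BT in simp)
  also have "y \<bullet> (transpose_mat B *\<^sub>v x) = (transpose_mat B *\<^sub>v x) \<bullet> y"
    by (rule comm_scalar_prod[OF cy]) (use BT cx in simp)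
  also have "\<dots> = x \<bullet> (B *\<^sub>v y)"
    by (rule transpose_vec_mult_scalar[OF B cy cx])
  finally show ?thesis unfolding x_def by simp
qed

definition Dm :: "real \<Rightarrow> real \<Rightarrow> nat \<Rightarrow> nat \<Rightarrow> real mat" where
  "Dm \<alpha> \<beta> m N = mat N N (\<lambda>(i,j). if i = j then (if i < m then \<alpha> else \<beta>) else 0)"

definition hf :: "complex vec \<Rightarrow> complex vec \<Rightarrow> complex" where
  "hf v w = (\<Sum>i\<in>{0..<dim_vec v}. cnj (v $ i) * w $ i)"

lemma P_eq:
  assumes A: "A \<in> carrier_mat m m" and B: "B \<in> carrier_mat m n"
  shows "P_MGSSP \<alpha> \<beta> A B = 2 \<cdot>\<^sub>m saddle_mat A B + Dm \<alpha> \<beta> m (m+n)"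
proof (rule eq_matI)
  have dA: "dim_row A = m" "dim_col A = m" and dB: "dim_row B = m" "dim_col B = n" using A B by auto
  fix i j assume i: "i < dim_row (2 \<cdot>\<^sub>m saddle_mat A B + Dm \<alpha> \<beta> m (m+n))" and j: "j < dim_col (2 \<cdot>\<^sub>m saddle_mat A B + Dm \<alpha> \<beta> m (m+n))"
  hence i': "i < m+n" and j': "j < m+n" by (simp_all add: Dm_def)
  show "P_MGSSP \<alpha> \<beta> A B $$ (i, j) = (2 \<cdot>\<^sub>m saddle_mat A B + Dm \<alpha> \<beta> m (m+n)) $$ (i, j)"
    using i' j' unfolding P_MGSSP_def saddle_mat_def Dm_def
    by (cases "i < m"; cases "j < m"; auto simp add: dA dB)
qed (insert A B, auto simp: P_MGSSP_def saddle_mat_def Dm_def)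


lemma alg:
  fixes z lam :: complex and e :: real
  assumes a: "Re z \<ge> 0" and e: "e \<ge> 0" and eq: "z = lam * (2*z + complex_of_real e)"
    and nz: "\<not> (z = 0 \<and> e = 0)"
  shows "cmod (lam - 1/2) \<le> 1/2 \<and> (z \<noteq> 0 \<longrightarrow> Re lam > 0)"
proof -
  define w where "w = 2*z + complex_of_real e"
  have w0: "w \<noteq> 0" using eq nz unfolding w_def by (metis mult_zero_right add_0 add_cancel_right_left mult_zero_right of_real_eq_0_iff)
  have lw: "lam = z / w" using eq w0 unfolding w_def[symmetric] by (simp add: field_simps)
  have "lam - 1/2 = - complex_of_real e / (2*w)" using w0 unfolding lw by (simp add: field_simps w_def)
  hence c: "cmod (lam - 1/2) = e / (2 * cmod w)" using e by (simp add: norm_divide norm_mult)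
  have rew: "Re w = 2 * Re z + e" unfolding w_def by simp
  have "Re w \<le> cmod w" by (rule complex_Re_le_cmod)
  hence we: "e \<le> cmod w" using rew a by linarith
  have cw: "cmod w > 0" using w0 by simp
  have 1: "cmod (lam - 1/2) \<le> 1/2" unfolding c using we cw e by (simp add: field_simps)
  have 2: "Re lam > 0" if "z \<noteq> 0"
  proof -
    have "Re lam = (Re z * Re w + Im z * Im w) / ((Re w)\<^sup>2 + (Im w)\<^sup>2)" unfolding lw by (simp add: Re_divide)
    moreover have "Re z * Re w + Im z * Im w = 2 * ((Re z)\<^sup>2 + (Im z)\<^sup>2) + e * Re z"
    proof -
      have imw: "Im w = 2 * Im z" unfolding w_def by simp
      show ?thesis unfolding rew imw by (simp add: power2_eq_square algebra_simps)
    qed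
    moreover have "(Re z)\<^sup>2 + (Im z)\<^sup>2 > 0" using that by (simp add: complex_eq_iff add_nonneg_eq_0_iff sum_power2_gt_zero_iff)
    moreover have "(Re w)\<^sup>2 + (Im w)\<^sup>2 > 0" using w0 by (simp add: complex_eq_iff sum_power2_gt_zero_iff)
    ultimately show ?thesis using a e by (simp add: add_pos_nonneg)
  qed
  show ?thesis using 1 2 by blast
qed

lemma hf_P_index:
  assumes A: "A \<in> carrier_mat m m" and B: "B \<in> carrier_mat m n" and v: "v \<in> carrier_vec (m+n)"
    and i: "i < m+n"
  shows "(map_mat complex_of_real (P_MGSSP \<alpha> \<beta> A B) *\<^sub>v v) $ i =
     2 * (map_mat complex_of_real (saddle_mat A B) *\<^sub>v v) $ i + complex_of_real (if i < m then \<alpha> else \<beta>) * v $ i"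
proof -
  have S: "saddle_mat A B \<in> carrier_mat (m+n) (m+n)" using A B unfolding saddle_mat_def by auto
  let ?D = "Dm \<alpha> \<beta> m (m+n)"
  have "(map_mat complex_of_real (P_MGSSP \<alpha> \<beta> A B) *\<^sub>v v) $ i =
     (\<Sum>j\<in>{0..<m+n}. (2 * complex_of_real (saddle_mat A B $$ (i,j)) * v $ j + complex_of_real (?D $$ (i,j)) * v $ j))"
    unfolding P_eq[OF A B] using S v i by (simp add: mult_mat_vec_def scalar_prod_def Dm_def algebra_simps)
  also have "\<dots> = 2 * (\<Sum>j\<in>{0..<m+n}. complex_of_real (saddle_mat A B $$ (i,j)) * v $ j)
     + (\<Sum>j\<in>{0..<m+n}. complex_of_real (?D $$ (i,j)) * v $ j)"
    by (simp add: sum.distrib sum_distrib_left mult.assoc)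
  also have "(\<Sum>j\<in>{0..<m+n}. complex_of_real (?D $$ (i,j)) * v $ j) = 
     (\<Sum>j\<in>{0..<m+n}. if i = j then complex_of_real (if i < m then \<alpha> else \<beta>) * v $ j else 0)"
    by (rule sum.cong, simp, insert i, auto simp: Dm_def)
  also have "\<dots> = complex_of_real (if i < m then \<alpha> else \<beta>) * v $ i" using i by simp
  also have "(\<Sum>j\<in>{0..<m+n}. complex_of_real (saddle_mat A B $$ (i,j)) * v $ j) = (map_mat complex_of_real (saddle_mat A B) *\<^sub>v v) $ i"
    using S v i by (simp add: mult_mat_vec_def scalar_prod_def)
  finally show ?thesis .
qed

lemma pd_nonneg:
  assumes A: "A \<in> carrier_mat m m" and pd: "pos_def_mat A" and x: "x \<in> carrier_vec m"
  shows "x \<bullet> (A *\<^sub>v x) \<ge> 0" "x \<bullet> (A *\<^sub>v x) = 0 \<Longrightarrow> x = 0\<^sub>v m"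
proof -
  have h: "\<And>x. x \<in> carrier_vec m \<Longrightarrow> x \<noteq> 0\<^sub>v m \<Longrightarrow> x \<bullet> (A *\<^sub>v x) > 0"
    using pd A unfolding pos_def_mat_def by auto
  show "x \<bullet> (A *\<^sub>v x) \<ge> 0"
  proof (cases "x = 0\<^sub>v m")
    case True thus ?thesis using A by simp
  next
    case False thus ?thesis using h[OF x] by simp
  qed
  show "x \<bullet> (A *\<^sub>v x) = 0 \<Longrightarrow> x = 0\<^sub>v m" using h[OF x] by force
qed

lemma core:
  assumes A: "A \<in> carrier_mat m m" and B: "B \<in> carrier_mat m n" and pd: "pos_def_mat A"
    and al: "\<alpha> \<ge> 0" and be: "\<beta> > 0" and v: "v \<in> carrier_vec (m+n)"
  defines "z \<equiv> hf v (map_mat complex_of_real (saddle_mat A B) *\<^sub>v v)"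
    and "e \<equiv> (\<Sum>i\<in>{0..<m+n}. (if i < m then \<alpha> else \<beta>) * ((Re (v$i))\<^sup>2 + (Im (v$i))\<^sup>2))"
  shows "Re z \<ge> 0" "Re z = 0 \<Longrightarrow> (\<forall>i<m. v $ i = 0)" "e \<ge> 0"
    "hf v (map_mat complex_of_real (P_MGSSP \<alpha> \<beta> A B) *\<^sub>v v) = 2 * z + complex_of_real e"
    "(\<forall>i<m. v $ i = 0) \<Longrightarrow> v \<noteq> 0\<^sub>v (m+n) \<Longrightarrow> e > 0"
proof -
  have S: "saddle_mat A B \<in> carrier_mat (m+n) (m+n)" using A B unfolding saddle_mat_def by auto
  have dv: "dim_vec v = m + n" using v by auto
  let ?xr = "vec_first (rv (m+n) v) m" and ?xi = "vec_first (iv (m+n) v) m"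
  have rz: "Re z = ?xr \<bullet> (A *\<^sub>v ?xr) + ?xi \<bullet> (A *\<^sub>v ?xi)"
    unfolding z_def hf_def dv quad_re[OF S v]
    using saddle_quad[OF A B, of "rv (m+n) v"] saddle_quad[OF A B, of "iv (m+n) v"]
    by (simp add: rv_def iv_def)
  have p1: "?xr \<bullet> (A *\<^sub>v ?xr) \<ge> 0" and p2: "?xi \<bullet> (A *\<^sub>v ?xi) \<ge> 0"
    using pd_nonneg(1)[OF A pd] by auto
  show "Re z \<ge> 0" using rz p1 p2 by simp
  show "\<forall>i<m. v $ i = 0" if "Re z = 0"
  proof -
    have "?xr \<bullet> (A *\<^sub>v ?xr) = 0" "?xi \<bullet> (A *\<^sub>v ?xi) = 0" using that rz p1 p2 by linarith+
    hence "?xr = 0\<^sub>v m" "?xi = 0\<^sub>v m" using pd_nonneg(2)[OF A pd] by auto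
    hence "\<And>i. i < m \<Longrightarrow> Re (v $ i) = 0 \<and> Im (v $ i) = 0"
      by (metis (no_types, lifting) index_zero_vec(1) vec_first_def index_vec rv_def iv_def trans_less_add1)
    thus ?thesis by (simp add: complex_eq_iff)
  qed
  show "e \<ge> 0" unfolding e_def using al be by (intro sum_nonneg) auto
  have "hf v (map_mat complex_of_real (P_MGSSP \<alpha> \<beta> A B) *\<^sub>v v) =
    (\<Sum>i\<in>{0..<m+n}. 2 * (cnj (v $ i) * (map_mat complex_of_real (saddle_mat A B) *\<^sub>v v) $ i)
       + complex_of_real ((if i < m then \<alpha> else \<beta>) * ((Re (v$i))\<^sup>2 + (Im (v$i))\<^sup>2)))"
    unfolding hf_def dv
  proof (rule sum.cong[OF refl])
    fix i assume "i \<in> {0..<m+n}"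
    hence i: "i < m + n" by auto
    have "cnj (v $ i) * (complex_of_real (if i < m then \<alpha> else \<beta>) * v $ i) =
      complex_of_real (if i < m then \<alpha> else \<beta>) * (v $ i * cnj (v $ i))" by (simp add: ac_simps)
    also have "\<dots> = complex_of_real ((if i < m then \<alpha> else \<beta>) * ((Re (v$i))\<^sup>2 + (Im (v$i))\<^sup>2))"
      unfolding complex_mult_cnj by simp
    finally show "cnj (v $ i) * (map_mat complex_of_real (P_MGSSP \<alpha> \<beta> A B) *\<^sub>v v) $ i = 
      2 * (cnj (v $ i) * (map_mat complex_of_real (saddle_mat A B) *\<^sub>v v) $ i)
       + complex_of_real ((if i < m then \<alpha> else \<beta>) * ((Re (v$i))\<^sup>2 + (Im (v$i))\<^sup>2))"
      unfolding hf_P_index[OF A B v i] by (simp add: algebra_simps)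
  qed
  also have "\<dots> = 2 * z + complex_of_real e"
    unfolding z_def e_def hf_def dv by (simp add: sum.distrib sum_distrib_left)
  finally show "hf v (map_mat complex_of_real (P_MGSSP \<alpha> \<beta> A B) *\<^sub>v v) = 2 * z + complex_of_real e" .
  show "e > 0" if x0: "\<forall>i<m. v $ i = 0" and nz: "v \<noteq> 0\<^sub>v (m+n)"
  proof -
    obtain k where k: "k < m + n" "v $ k \<noteq> 0" using nz v by (metis eq_vecI carrier_vecD index_zero_vec)
    have km: "\<not> k < m" using k x0 by auto
    have "0 < (if k < m then \<alpha> else \<beta>) * ((Re (v$k))\<^sup>2 + (Im (v$k))\<^sup>2)"
      using km be k(2) by (simp add: complex_eq_iff sum_power2_gt_zero_iff)
    also have "\<dots> \<le> e" unfolding e_def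
      by (rule member_le_sum, insert k al be, auto)
    finally show ?thesis .
  qed
qed

lemma full_rank_inj:
  fixes B :: "real mat"
  assumes B: "B \<in> carrier_mat m n" and r: "vec_space.rank m B = n"
    and y: "y \<in> carrier_vec n" and By: "B *\<^sub>v y = 0\<^sub>v m"
  shows "y = 0\<^sub>v n"
proof -
  interpret V: vec_space "TYPE(real)" m .
  have dist: "distinct (cols B)"
  proof (rule ccontr)
    assume nd: "\<not> distinct (cols B)"
    have lc: "length (cols B) = n" using B by simp
    have "card (set (cols B)) \<noteq> n" using nd card_distinct lc by metis
    hence cs: "card (set (cols B)) < n" using card_length[of "cols B"] lc by linarith
    obtain S where S: "maximal S (\<lambda>T. T \<subseteq> set (cols B) \<and> \<not> module.lin_dep class_ring (module_vec TYPE(real) m) T)"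
      using maximal_exists[of "(\<lambda>T. T \<subseteq> set (cols B) \<and> \<not> module.lin_dep class_ring (module_vec TYPE(real) m) T)" "card (set (cols B))" "{}"]
      by (meson List.finite_set card_mono empty_iff empty_subsetI V.finite_lin_indpt2 rev_finite_subset)
    have "card S \<le> card (set (cols B))" using S by (simp add: card_mono maximal_def)
    moreover have "vec_space.rank m B = card S" by (rule vec_space.rank_card_indpt[OF B S])
    ultimately show False using r cs by linarith
  qed
  show ?thesis
  proof (rule ccontr)
    assume "y \<noteq> 0\<^sub>v n"
    from vec_space.lin_depI[OF B y this By dist] vec_space.full_rank_lin_indpt[OF B r dist]
    show False by blast
  qed
qed

lemma first_block:
  fixes A B :: "real mat"
  assumes A: "A \<in> carrier_mat m m" and B: "B \<in> carrier_mat m n" and u: "u \<in> carrier_vec (m+n)"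
    and u0: "\<forall>i<m. u $ i = 0" and i: "i < m"
  shows "(saddle_mat A B *\<^sub>v u) $ i = (B *\<^sub>v vec_last u n) $ i"
proof -
  define x where "x = vec_first u m"
  define y where "y = vec_last u n"
  have cx: "x \<in> carrier_vec m" and cy: "y \<in> carrier_vec n" unfolding x_def y_def by auto
  have x0: "x = 0\<^sub>v m" unfolding x_def vec_first_def using u0 by (intro eq_vecI) auto
  have u': "u = x @\<^sub>v y" using u unfolding x_def y_def by simp
  have dB: "dim_col B = n" using B by auto
  have "saddle_mat A B *\<^sub>v (x @\<^sub>v y) = (A *\<^sub>v x + B *\<^sub>v y) @\<^sub>v (- transpose_mat B *\<^sub>v x + 0\<^sub>m n n *\<^sub>v y)"
    unfolding saddle_mat_def dB
    by (rule four_block_mat_mult_vec[OF A B _ _ cx cy]) (use B in auto)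
  hence "(saddle_mat A B *\<^sub>v u) $ i = (A *\<^sub>v x + B *\<^sub>v y) $ i"
    unfolding u'[symmetric] using i A B cx cy by simp
  also have "\<dots> = (B *\<^sub>v y) $ i" using i A B cy unfolding x0 by simp
  finally show ?thesis unfolding y_def .
qed

theorem mainTheorem9:
  fixes m n :: nat and A B :: "real mat" and \<alpha> \<beta> :: real
  assumes "A \<in> carrier_mat m m" and "B \<in> carrier_mat m n" and "n \<le> m"
    and "pos_def_mat A" and "\<alpha> \<ge> 0" and "\<beta> > 0"
  shows "(\<forall>lam. eigenvalue (map_mat complex_of_real
              (the (mat_inverse (P_MGSSP \<alpha> \<beta> A B)) * saddle_mat A B)) lam
            \<longrightarrow> cmod (lam - 1/2) \<le> 1/2)
      \<and> (vec_space.rank m B = n \<longrightarrow>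
          (\<forall>lam. eigenvalue (map_mat complex_of_real
              (the (mat_inverse (P_MGSSP \<alpha> \<beta> A B)) * saddle_mat A B)) lam
            \<longrightarrow> Re lam > 0))"
proof -
  note A = assms(1) and B = assms(2) and pd = assms(4) and al = assms(5) and be = assms(6)
  define N where "N = m + n"
  define S where "S = saddle_mat A B"
  define P where "P = P_MGSSP \<alpha> \<beta> A B"
  have S: "S \<in> carrier_mat N N" using A B unfolding S_def saddle_mat_def N_def by auto
  have P: "P \<in> carrier_mat N N" using A B unfolding P_def P_MGSSP_def N_def by auto
  define e where "e v = (\<Sum>i\<in>{0..<N}. (if i < m then \<alpha> else \<beta>) * ((Re (v$i))\<^sup>2 + (Im (v$i))\<^sup>2))" for v :: "complex vec"
  define zz where "zz v = hf v (map_mat complex_of_real S *\<^sub>v v)" for v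
  note core = core[OF A B pd al be, folded S_def P_def N_def, folded e_def zz_def]
  have inj: "u = 0\<^sub>v N" if u: "u \<in> carrier_vec N" and Pu: "P *\<^sub>v u = 0\<^sub>v N" for u
  proof (rule ccontr)
    assume nz: "u \<noteq> 0\<^sub>v N"
    define v where "v = map_vec complex_of_real u"
    have v: "v \<in> carrier_vec N" using u unfolding v_def by simp
    have vnz: "v \<noteq> 0\<^sub>v N"
    proof
      assume "v = 0\<^sub>v N"
      hence "\<And>i. i < N \<Longrightarrow> u $ i = 0" unfolding v_def using u
        by (metis carrier_vecD index_map_vec(1) index_zero_vec(1) of_real_eq_0_iff)
      hence "u = 0\<^sub>v N" using u by (intro eq_vecI) auto
      thus False using nz by simp
    qed
    have "map_mat complex_of_real P *\<^sub>v v = map_vec complex_of_real (P *\<^sub>v u)"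
      unfolding v_def by (rule of_real_hom.mult_mat_vec_hom[OF P u, symmetric])
    also have "\<dots> = 0\<^sub>v N" unfolding Pu by (intro eq_vecI) auto
    finally have "hf v (map_mat complex_of_real P *\<^sub>v v) = 0" unfolding hf_def using v by simp
    hence eq: "2 * zz v + complex_of_real (e v) = 0" using core(4)[OF v] by simp
    have r1: "Re (zz v) \<ge> 0" and r2: "e v \<ge> 0" using core(1,3)[OF v] by auto
    from arg_cong[OF eq, of Re] have "2 * Re (zz v) + e v = 0" by simp
    hence "Re (zz v) = 0" "e v = 0" using r1 r2 by linarith+
    with core(2,5)[OF v] vnz show False unfolding N_def by auto
  qed
  have "det P \<noteq> 0" using inj det_0_iff_vec_prod_zero_field[OF P] by blast
  hence "P \<in> Units (ring_mat TYPE(real) N ())" by (rule det_non_zero_imp_unit[OF P])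
  then obtain Pi where Pi': "mat_inverse P = Some Pi" using mat_inverse(1)[OF P, of "()"] by (cases "mat_inverse P") auto
  from mat_inverse(2)[OF P Pi'] have PPi: "P * Pi = 1\<^sub>m N" and Pi: "Pi \<in> carrier_mat N N" by auto
  have theq: "the (mat_inverse P) = Pi" using Pi' by simp
  let ?Sc = "map_mat complex_of_real S" and ?Pc = "map_mat complex_of_real P" and ?Pic = "map_mat complex_of_real Pi"
  have Sc: "?Sc \<in> carrier_mat N N" and Pc: "?Pc \<in> carrier_mat N N" and Pic: "?Pic \<in> carrier_mat N N"
    using S P Pi by auto
  have PcPic: "?Pc * ?Pic = 1\<^sub>m N"
    using of_real_hom.mat_hom_mult[OF P Pi] PPi of_real_hom.mat_hom_one by metis
  have key: "cmod (lam - 1/2) \<le> 1/2 \<and> (vec_space.rank m B = n \<longrightarrow> Re lam > 0)"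
    if ev: "eigenvalue (map_mat complex_of_real (Pi * S)) lam" for lam
  proof -
    obtain v where evv: "eigenvector (map_mat complex_of_real (Pi * S)) v lam" using ev unfolding eigenvalue_def by auto
    have M: "map_mat complex_of_real (Pi * S) = ?Pic * ?Sc" using of_real_hom.mat_hom_mult[OF Pi S] .
    have v: "v \<in> carrier_vec N" and vnz: "v \<noteq> 0\<^sub>v N" and Mv: "(?Pic * ?Sc) *\<^sub>v v = lam \<cdot>\<^sub>v v"
      using evv Pi unfolding eigenvector_def M by auto
    have "?Sc *\<^sub>v v = ((?Pc * ?Pic) * ?Sc) *\<^sub>v v" unfolding PcPic using Sc by simp
    also have "\<dots> = ?Pc *\<^sub>v ((?Pic * ?Sc) *\<^sub>v v)"
      unfolding assoc_mult_mat[OF Pc Pic Sc] by (rule assoc_mult_mat_vec[OF Pc mult_carrier_mat[OF Pic Sc] v])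
    also have "\<dots> = lam \<cdot>\<^sub>v (?Pc *\<^sub>v v)" unfolding Mv by (rule mult_mat_vec[OF Pc v])
    finally have Sv: "?Sc *\<^sub>v v = lam \<cdot>\<^sub>v (?Pc *\<^sub>v v)" .
    have dv: "dim_vec v = N" using v by auto
    have "zz v = lam * hf v (?Pc *\<^sub>v v)"
      unfolding zz_def Sv hf_def dv using Pc by (simp add: sum_distrib_left ac_simps)
    hence eq: "zz v = lam * (2 * zz v + complex_of_real (e v))"
      using core(4)[OF v] by simp
    have r1: "Re (zz v) \<ge> 0" and r2: "e v \<ge> 0" using core(1,3)[OF v] by auto
    have nzz: "\<not> (zz v = 0 \<and> e v = 0)"
      using core(2,5)[OF v] vnz unfolding N_def by auto
    note res = alg[OF r1 r2 eq nzz]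
    have "Re lam > 0" if rk: "vec_space.rank m B = n"
    proof -
      have "zz v \<noteq> 0"
      proof
        assume z0: "zz v = 0"
        have x0: "\<forall>i<m. v $ i = 0" using core(2)[OF v] z0 by simp
        have ep: "e v > 0" using core(5)[OF v x0] vnz unfolding N_def by auto
        have "lam = 0" using eq z0 ep by simp
        hence Sv0: "?Sc *\<^sub>v v = 0\<^sub>v N" unfolding Sv using Pc v by (intro eq_vecI) auto
        have comp: "(S *\<^sub>v rv N v) $ i = 0 \<and> (S *\<^sub>v iv N v) $ i = 0" if i: "i < m" for i
        proof -
          have "(?Sc *\<^sub>v v) $ i = 0" using Sv0 i unfolding N_def by simp
          hence "complex_of_real ((S *\<^sub>v rv N v) $ i) + \<i> * complex_of_real ((S *\<^sub>v iv N v) $ i) = 0"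
            using cmult_decomp[OF S v, of i] i unfolding N_def by simp
          thus ?thesis by (simp add: complex_eq_iff)
        qed
        have rvc: "rv N v \<in> carrier_vec (m+n)" and ivc: "iv N v \<in> carrier_vec (m+n)"
          unfolding rv_def iv_def N_def by auto
        have rv0: "\<forall>i<m. rv N v $ i = 0" and iv0: "\<forall>i<m. iv N v $ i = 0"
          using x0 unfolding rv_def iv_def N_def by auto
        have "B *\<^sub>v vec_last (rv N v) n = 0\<^sub>v m"
          using comp first_block[OF A B rvc rv0] B unfolding S_def by (intro eq_vecI) auto
        hence yr: "vec_last (rv N v) n = 0\<^sub>v n" by (rule full_rank_inj[OF B rk vec_last_carrier])
        have "B *\<^sub>v vec_last (iv N v) n = 0\<^sub>v m"
          using comp first_block[OF A B ivc iv0] B unfolding S_def by (intro eq_vecI) auto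
        hence yi: "vec_last (iv N v) n = 0\<^sub>v n" by (rule full_rank_inj[OF B rk vec_last_carrier])
        have "v $ k = 0" if k: "k < N" for k
        proof (cases "k < m")
          case True thus ?thesis using x0 by simp
        next
          case False
          define j where "j = k - m"
          have j: "j < n" "k = m + j" using k False unfolding j_def N_def by auto
          have "vec_last (rv N v) n $ j = 0" "vec_last (iv N v) n $ j = 0" using yr yi j by auto
          hence "Re (v $ k) = 0" "Im (v $ k) = 0" using j k unfolding vec_last_def rv_def iv_def N_def by auto
          thus ?thesis by (simp add: complex_eq_iff)
        qed
        hence "v = 0\<^sub>v N" using v by (intro eq_vecI) auto
        thus False using vnz by simp
      qed
      thus ?thesis using res by blast
    qed
    thus ?thesis using res by blast
  qed
  show ?thesis unfolding P_def[symmetric] S_def[symmetric] theq using key by blast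
qed

end
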